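(* For $n\in\mathbb{Z}^+$ we have $$\begin{aligned}&t(1,4,7;n)=2N(1,4,7;2n+3)&&\text{for } n\equiv 1\pmod 4,\\ &t(1,7,12;n)=2N(1,7,12;2n+5)&&\text{for } n\equiv 3\pmod 4,\\ &t(1,7,28;n)=2N(1,7,28;2n+9)&&\text{for } n\equiv 1\pmod 4,\\ &t(3,4,21;n)=2N(3,4,21;2n+7)&&\text{for } n\equiv 1\pmod 4,\\ &t(3,21,28;n)=2N(3,21,28;2n+13)&&\text{for } n\equiv 1\pmod 4.\end{aligned}$$
   Context: $\mathbb{Z}^+$ is the set of positive integers. For $a,b,c\in\mathbb{Z}^+$ and nonnegative integer $n$, $N(a,b,c;n)$ denotes the number of triples $(x,y,z)\in\mathbb{Z}^3$ with $n=ax^2+by^2+cz^2$, and $t(a,b,c;n)$ denotes the number of triples $(x,y,z)\in\mathbb{Z}^3$ with $n=a\frac{x(x+1)}2+b\frac{y(y+1)}2+c\frac{z(z+1)}2$. *)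

theory Defs
  imports Main
begin

definition N :: "nat \<Rightarrow> nat \<Rightarrow> nat \<Rightarrow> nat \<Rightarrow> nat" where
  "N a b c n = card {(x::int, y::int, z::int).
      int n = int a * x\<^sup>2 + int b * y\<^sup>2 + int c * z\<^sup>2}"

definition t :: "nat \<Rightarrow> nat \<Rightarrow> nat \<Rightarrow> nat \<Rightarrow> nat" where
  "t a b c n = card {(x::int, y::int, z::int).
      int n = int a * (x * (x + 1) div 2) + int b * (y * (y + 1) div 2)
              + int c * (z * (z + 1) div 2)}"

end

theory Submission
  imports Defs
begin


definition sg :: "bool \<Rightarrow> int \<Rightarrow> int" where "sg b x = (if b then - x else x)"

lemma sg_sq[simp]: "(sg b x)^2 = x^2" by (simp add: sg_def)
lemma sg_odd[simp]: "odd (sg b x) = odd x" by (simp add: sg_def)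
lemma sg_sg[simp]: "sg b (sg b x) = x" by (simp add: sg_def)

lemma sq_odd_tri: "(2*x+1)^2 = 8*(x*(x+1) div 2) + (1::int)"
proof -
  have h: "x*(x+1) = 2*(x*(x+1) div 2)" by (cases "even x") auto
  have "(2*x+1)^2 = 4*(x*(x+1)) + 1" by (simp add: power2_eq_square algebra_simps)
  also have "\<dots> = 4*(2*(x*(x+1) div 2)) + 1" using h by simp
  finally show ?thesis by simp
qed

lemma odd_sq: assumes "odd (x::int)" obtains k where "x^2 = 8*k+1"
proof -
  from assms obtain a where "x = 2*a+1" by (auto elim!: oddE)
  then show ?thesis using sq_odd_tri[of a] that by auto
qed

lemma mod8_cases: "(x::int) mod 8 = 0 \<or> x mod 8 = 1 \<or> x mod 8 = 2 \<or> x mod 8 = 3 \<or> x mod 8 = 4 \<or> x mod 8 = 5 \<or> x mod 8 = 6 \<or> x mod 8 = 7"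
  by presburger

lemma prod8_res: "(a::int) \<in> {0..7} \<Longrightarrow> b \<in> {0..7} \<Longrightarrow> odd a \<Longrightarrow> (a*b) mod 8 = 4 \<Longrightarrow> b = 4"
proof -
  assume a: "a \<in> {0..7}" and b: "b \<in> {0..7}" and "odd a" and h: "(a*b) mod 8 = 4"
  have "a = 1 \<or> a = 3 \<or> a = 5 \<or> a = 7" using a \<open>odd a\<close> by auto presburger
  moreover have "b = 0 \<or> b = 1 \<or> b = 2 \<or> b = 3 \<or> b = 4 \<or> b = 5 \<or> b = 6 \<or> b = 7" using b by auto
  ultimately show "b = 4" using h by (elim disjE) simp_all
qed

lemma prod8: assumes "((A::int)*B) mod 8 = 4" "odd A" shows "B mod 8 = 4"
proof -
  have o: "A mod 8 mod 2 = 1" using assms(2) by (simp add: odd_iff_mod_2_eq_one mod_mod_cancel)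
  have e: "((A mod 8) * (B mod 8)) mod 8 = 4" using assms(1) by (simp add: mod_mult_eq)
  show ?thesis by (rule prod8_res[OF _ _ _ e]) (use o in \<open>auto simp: odd_iff_mod_2_eq_one\<close>)
qed

lemma sq_mod8: "(x::int)^2 mod 8 = (x mod 4)^2 mod 8"
proof -
  obtain q r where x: "x = 4*q + r" and r: "r = x mod 4" by (metis div_mult_mod_eq mult.commute)
  have "x^2 = r^2 + 8*(2*q^2 + q*r)" unfolding x by (simp add: power2_eq_square algebra_simps)
  then have "x^2 mod 8 = (r^2 + 8*(2*q^2 + q*r)) mod 8" by simp
  also have "\<dots> = r^2 mod 8" by (rule mod_mult_self2)
  finally show ?thesis using r by simp
qed

lemma mod4_cases: "(x::int) mod 4 = 0 \<or> x mod 4 = 1 \<or> x mod 4 = 2 \<or> x mod 4 = 3" by presburger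

lemma quad_mod8:
  fixes x y z :: int
  assumes "m = a*x^2 + b*y^2 + c*z^2"
  shows "m mod 8 = (a*((x mod 4)^2 mod 8) + b*((y mod 4)^2 mod 8) + c*((z mod 4)^2 mod 8)) mod 8"
  unfolding assms
  by (intro mod_add_cong mod_mult_cong refl) (simp_all add: sq_mod8[of x] sq_mod8[of y] sq_mod8[of z])

lemma two_adic:
  fixes A B :: int
  assumes "(A*B) mod 32 = 16" "(A+B) mod 4 = 2"
  shows "(A mod 16 = 8 \<and> B mod 4 = 2) \<or> (B mod 16 = 8 \<and> A mod 4 = 2)"
proof -
  have ev: "\<And>p::int. p mod 32 = 16 \<Longrightarrow> even p" by presburger
  have "even A"
  proof (rule ccontr)
    assume "odd A"
    then have "odd B" using assms(2) by presburger
    with \<open>odd A\<close> have "odd (A*B)" by simp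
    then show False using ev[OF assms(1)] by simp
  qed
  then obtain A' where A: "A = 2*A'" by auto
  have "even B" using \<open>even A\<close> assms(2) by presburger
  then obtain B' where B: "B = 2*B'" by auto
  have "(4*(A'*B')) mod 32 = 16" using assms(1) A B by (simp add: algebra_simps)
  moreover have "\<And>p::int. (4*p) mod 32 = 16 \<Longrightarrow> p mod 8 = 4" by presburger
  ultimately have p: "(A'*B') mod 8 = 4" by blast
  have "odd (A' + B')" using assms(2) A B by presburger
  then consider "odd A'" | "odd B'" by auto
  then show ?thesis
  proof cases
    case 1
    then have b4: "B' mod 8 = 4" using prod8[OF p] by simp
    have "A mod 4 = 2" using A \<open>odd A'\<close> by presburger
    moreover have "B mod 16 = 8" using B b4 by presburger
    ultimately show ?thesis by simp
  next
    case 2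
    then have a4: "A' mod 8 = 4" using prod8[of B' A'] p by (simp add: mult.commute)
    have "B mod 4 = 2" using B \<open>odd B'\<close> by presburger
    moreover have "A mod 16 = 8" using A a4 by presburger
    ultimately show ?thesis by simp
  qed
qed

lemma count2:
  assumes "bij_betw f (M \<times> (UNIV::bool set)) S"
  shows "card S = 2 * card M"
  using bij_betw_same_card[OF assms] by (simp add: card_cartesian_product)

lemma count4:
  assumes sig: "\<And>w. w \<in> M \<Longrightarrow> \<sigma> w \<in> M \<and> \<sigma> (\<sigma> w) = w \<and> (P (\<sigma> w) \<longleftrightarrow> \<not> P w)"
    and bij: "bij_betw f ({w\<in>M. P w} \<times> (UNIV::(bool\<times>bool) set)) S"
  shows "card S = 2 * card M"
proof -
  have c4: "card (UNIV::(bool\<times>bool) set) = 4"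
    by (simp add: UNIV_Times_UNIV[symmetric] card_cartesian_product del: UNIV_Times_UNIV)
  have 1: "card S = card {w\<in>M. P w} * 4"
    using bij_betw_same_card[OF bij] by (simp add: card_cartesian_product c4)
  have "bij_betw (\<lambda>(w,b). if b then w else \<sigma> w) ({w\<in>M. P w} \<times> (UNIV::bool set)) M"
  proof (rule bij_betw_byWitness[where f'="\<lambda>w. if P w then (w,True) else (\<sigma> w, False)"])
    show "\<forall>a\<in>{w \<in> M. P w} \<times> UNIV. (\<lambda>w. if P w then (w, True) else (\<sigma> w, False)) ((\<lambda>(w, b). if b then w else \<sigma> w) a) = a"
      using sig by auto
    show "\<forall>a'\<in>M. (\<lambda>(w, b). if b then w else \<sigma> w) ((\<lambda>w. if P w then (w, True) else (\<sigma> w, False)) a') = a'"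
      using sig by auto
    show "(\<lambda>(w, b). if b then w else \<sigma> w) ` ({w \<in> M. P w} \<times> UNIV) \<subseteq> M"
      using sig by auto
    show "(\<lambda>w. if P w then (w, True) else (\<sigma> w, False)) ` M \<subseteq> {w \<in> M. P w} \<times> UNIV"
      using sig by auto
  qed
  from bij_betw_same_card[OF this] have "card M = card {w\<in>M. P w} * 2"
    by (simp add: card_cartesian_product)
  with 1 show ?thesis by simp
qed



lemma lin8: "((n::int) = a*A + b*B + c*C) \<longleftrightarrow> (a*(8*A+1) + b*(8*B+1) + c*(8*C+1) = 8*n + a + b + c)"
  by (auto simp: algebra_simps)

lemma t_odd:
  "t a b c n = card {(u::int,v::int,w::int). odd u \<and> odd v \<and> odd w \<and>
     int a*u^2 + int b*v^2 + int c*w^2 = 8*int n + int a + int b + int c}"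
proof -
  let ?A = "{(x::int,y::int,z::int). int n = int a*(x*(x+1) div 2) + int b*(y*(y+1) div 2) + int c*(z*(z+1) div 2)}"
  let ?B = "{(u::int,v::int,w::int). odd u \<and> odd v \<and> odd w \<and>
     int a*u^2 + int b*v^2 + int c*w^2 = 8*int n + int a + int b + int c}"
  have key: "int n = int a*(x*(x+1) div 2) + int b*(y*(y+1) div 2) + int c*(z*(z+1) div 2)
     \<longleftrightarrow> int a*(2*x+1)^2 + int b*(2*y+1)^2 + int c*(2*z+1)^2 = 8*int n + int a + int b + int c" for x y z
    unfolding sq_odd_tri by (rule lin8)
  have "bij_betw (\<lambda>(x,y,z). (2*x+1, 2*y+1, 2*z+1)) ?A ?B"
  proof (rule bij_betw_byWitness[where f'="\<lambda>(u,v,w). ((u-1) div 2, (v-1) div 2, (w-1) div 2)"])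
    show "\<forall>a\<in>?A. (\<lambda>(u,v,w). ((u-1) div 2, (v-1) div 2, (w-1) div 2)) ((\<lambda>(x,y,z). (2*x+1, 2*y+1, 2*z+1)) a) = a"
      by auto
    show "\<forall>a\<in>?B. (\<lambda>(x,y,z). (2*x+1, 2*y+1, 2*z+1)) ((\<lambda>(u,v,w). ((u-1) div 2, (v-1) div 2, (w-1) div 2)) a) = a"
      by (auto elim!: oddE)
    show "(\<lambda>(x,y,z). (2*x+1, 2*y+1, 2*z+1)) ` ?A \<subseteq> ?B"
      using key by auto
    show "(\<lambda>(u,v,w). ((u-1) div 2, (v-1) div 2, (w-1) div 2)) ` ?B \<subseteq> ?A"
    proof (clarsimp)
      fix u v w :: int
      assume h: "odd u" "odd v" "odd w" "int a*u^2 + int b*v^2 + int c*w^2 = 8*int n + int a + int b + int c"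
      have e: "2*((u-1) div 2)+1 = u" "2*((v-1) div 2)+1 = v" "2*((w-1) div 2)+1 = w"
        using h(1-3) by (auto elim!: oddE)
      show "int n = int a*((u-1) div 2*((u-1) div 2+1) div 2) + int b*((v-1) div 2*((v-1) div 2+1) div 2) + int c*((w-1) div 2*((w-1) div 2+1) div 2)"
        using key[of "(u-1) div 2" "(v-1) div 2" "(w-1) div 2"] e h(4) by simp
    qed
  qed
  then show ?thesis unfolding t_def by (simp add: bij_betw_same_card)
qed



lemma res2: "rx \<in> {0..3} \<Longrightarrow> ry \<in> {0..3} \<Longrightarrow> rz \<in> {0..3} \<Longrightarrow>
  (1*(rx^2 mod 8) + 7*(ry^2 mod 8) + 12*(rz^2 mod 8)) mod 8 = (3::int) \<Longrightarrow>
  (rx = 0 \<or> rx = 2) \<and> (ry = 1 \<or> ry = 3) \<and> ((rx = 0 \<and> (rz = 1 \<or> rz = 3)) \<or> (rx = 2 \<and> (rz = 0 \<or> rz = 2)))"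
proof -
  assume "rx \<in> {0..3}" "ry \<in> {0..3}" "rz \<in> {0..3}" and h: "(1*(rx^2 mod 8) + 7*(ry^2 mod 8) + 12*(rz^2 mod 8)) mod 8 = (3::int)"
  then have "rx = 0 \<or> rx = 1 \<or> rx = 2 \<or> rx = 3" "ry = 0 \<or> ry = 1 \<or> ry = 2 \<or> ry = 3" "rz = 0 \<or> rz = 1 \<or> rz = 2 \<or> rz = 3" by auto
  then show ?thesis using h by (elim disjE) simp_all
qed

lemma pb1: "(x::int) mod 4 = 0 \<or> x mod 4 = 2 \<Longrightarrow> even x" by presburger
lemma pb2: "(x::int) mod 4 = 1 \<or> x mod 4 = 3 \<Longrightarrow> odd x" by presburger
lemma pb3: "((x::int) mod 4 = 0 \<and> (z mod 4 = 1 \<or> z mod 4 = 3)) \<or> (x mod 4 = 2 \<and> (z mod 4 = 0 \<or> z mod 4 = 2)) \<Longrightarrow> odd (x div 2 + z)"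
  by presburger

lemma M2_facts:
  fixes x y z m :: int
  assumes "m = x^2 + 7*y^2 + 12*z^2" "m mod 8 = 3"
  shows "even x \<and> odd y \<and> odd (x div 2 + z)"
proof -
  have "m = 1*x^2 + 7*y^2 + 12*z^2" using assms(1) by (simp only: mult_1)
  note q = quad_mod8[OF this]
  have h: "(1*((x mod 4)^2 mod 8) + 7*((y mod 4)^2 mod 8) + 12*((z mod 4)^2 mod 8)) mod 8 = 3"
    unfolding q[symmetric] by (rule assms(2))
  have r: "(x mod 4 = 0 \<or> x mod 4 = 2) \<and> (y mod 4 = 1 \<or> y mod 4 = 3) \<and> ((x mod 4 = 0 \<and> (z mod 4 = 1 \<or> z mod 4 = 3)) \<or> (x mod 4 = 2 \<and> (z mod 4 = 0 \<or> z mod 4 = 2)))"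
    by (rule res2[OF _ _ _ h]) simp_all
  show ?thesis using pb1[of x] pb2[of y] pb3[of x z] r by blast
qed

lemma lin_m4: "(q::int) mod 4 = 2 \<Longrightarrow> \<exists>v. q = 2*v \<and> odd v" by presburger
lemma lin_o: "odd ((a::int) + z) \<Longrightarrow> a - 3*y + 3*z = 2*v \<Longrightarrow> odd y \<Longrightarrow> odd (2*v + 3*y - 4*z)" by presburger
lemma tog_aux: "even (E::int) \<Longrightarrow> ((E + 2) mod 4 = 2) = (E mod 4 \<noteq> 2)" by presburger
lemma tog_base: assumes "even (E::int)" "odd y" shows "((E + 2*y) mod 4 = 2) = (E mod 4 \<noteq> 2)"
proof -
  obtain k where k: "y = 2*k+1" using assms(2) by (auto elim: oddE)
  have "(E + 2*y) mod 4 = ((E + 2) + 4*k) mod 4" unfolding k by (simp add: algebra_simps)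
  also have "\<dots> = (E + 2) mod 4" by (rule mod_mult_self2)
  finally show ?thesis using tog_aux[OF assms(1)] by simp
qed
lemma lin_tog: "odd (y::int) \<Longrightarrow> odd (a + z) \<Longrightarrow> ((a - 3*(-y) + 3*z) mod 4 = 2) = ((a - 3*y + 3*z) mod 4 \<noteq> 2)"
proof -
  assume y: "odd (y::int)" and az: "odd (a + z)"
  have e: "even (a - 3*y + 3*z)" using y az by simp
  have eq: "a - 3*(-y) + 3*z = (a - 3*y + 3*z) + 2*(3*y)" by simp
  show ?thesis unfolding eq by (rule tog_base[OF e]) (use y in simp)
qed

lemma lin_p32: "(p::int) = 288*j - 896*k2 - 864*k3 - 112 \<Longrightarrow> p mod 32 = 16"
proof -
  assume "p = 288*j - 896*k2 - 864*k3 - 112"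
  then have h: "p = 16 + 32*(9*j - 28*k2 - 27*k3 - 4)" by simp
  show ?thesis unfolding h mod_mult_self2 by simp
qed
lemma lin_d8: "(a::int) mod 16 = 8 \<Longrightarrow> 8 dvd a" "(a::int) mod 4 = 2 \<Longrightarrow> \<not> 8 dvd a" by presburger+
lemma lin_w: "(X::int) mod 16 = 8 \<Longrightarrow> odd w \<Longrightarrow> \<not> 32 dvd (X - 8*w) \<Longrightarrow> 32 dvd (X - 8*(-w))" by presburger
lemma lin_y: "32 dvd ((3::int)*u + 7*v - 8*w) \<Longrightarrow> 8 dvd (u - 3*v)"
proof -
  assume "32 dvd ((3::int)*u + 7*v - 8*w)"
  then obtain k where k: "3*u + 7*v - 8*w = 32*k" by (auto elim: dvdE)
  then have "u - 3*v = 8*(12*k - u - 3*v + 3*w)" by simp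
  then show ?thesis by (rule dvdI)
qed

lemma case2:
  fixes m :: int
  assumes m8: "m mod 8 = 3"
  shows "card {(u::int,v::int,w::int). odd u \<and> odd v \<and> odd w \<and> u^2 + 7*v^2 + 12*w^2 = 4*m}
       = 2 * card {(x::int,y::int,z::int). m = x^2 + 7*y^2 + 12*z^2}"
proof -
  define M where "M = {(x::int,y::int,z::int). m = x^2 + 7*y^2 + 12*z^2}"
  define S where "S = {(u::int,v::int,w::int). odd u \<and> odd v \<and> odd w \<and> u^2 + 7*v^2 + 12*w^2 = 4*m}"
  define P where "P = (\<lambda>(x::int,y::int,z::int). (x div 2 - 3*y + 3*z) mod 4 = 2)"
  define \<sigma> where "\<sigma> = (\<lambda>(x::int,y::int,z::int). (x,-y,z))"
  define f where "f = (\<lambda>((x::int,y::int,z::int),(b2::bool,b3::bool)).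
      let v = (x div 2 - 3*y + 3*z) div 2 in (3*v + 8*y, sg b2 v, sg b3 (x div 2 - z)))"
  define g where "g = (\<lambda>(u::int,v::int,w::int).
      let b2 = \<not> 8 dvd (3*u + 7*v); v' = sg b2 v; b3 = \<not> 32 dvd (3*u + 7*v' - 8*w); w' = sg b3 w;
          z = (3*u + 7*v' - 8*w') div 32
      in ((2*(z + w'), (u - 3*v') div 8, z), (b2, b3)))"
  have ident: "(3*v + 8*y)^2 + 7*v^2 + 12*(2*v + 3*y - 4*z)^2 = 4*((2*(2*v + 3*y - 3*z))^2 + 7*y^2 + 12*z^2)"
    for v y z :: int by (simp add: power2_eq_square algebra_simps)
  have fwd: "\<exists>v. odd v \<and> x = 2*(2*v + 3*y - 3*z) \<and> odd (2*v + 3*y - 4*z) \<and>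
              (x div 2 - 3*y + 3*z) div 2 = v \<and> x div 2 = 2*v + 3*y - 3*z"
    if "(x,y,z) \<in> M" "P (x,y,z)" for x y z
  proof -
    have mf: "even x \<and> odd y \<and> odd (x div 2 + z)" using M2_facts m8 that(1) by (auto simp: M_def)
    then obtain a where a: "x = 2*a" by auto
    then have xa: "x div 2 = a" by simp
    have "(a - 3*y + 3*z) mod 4 = 2" using that(2) xa by (simp add: P_def)
    then obtain v where v: "a - 3*y + 3*z = 2*v" "odd v" using lin_m4 by blast
    have "odd (a + z)" using mf xa by simp
    then have "odd (2*v + 3*y - 4*z)" using v(1) mf by (metis lin_o)
    moreover have "(x div 2 - 3*y + 3*z) div 2 = v" using xa v(1) by simp
    ultimately show ?thesis using v a xa by (intro exI[of _ v]) auto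
  qed
  have sig: "\<sigma> w \<in> M \<and> \<sigma> (\<sigma> w) = w \<and> (P (\<sigma> w) \<longleftrightarrow> \<not> P w)" if "w \<in> M" for w
  proof -
    obtain x y z where w: "w = (x,y,z)" by (cases w) auto
    have mf: "even x \<and> odd y \<and> odd (x div 2 + z)" using M2_facts m8 that by (auto simp: M_def w)
    then have "(x div 2 - 3*(-y) + 3*z) mod 4 = 2 \<longleftrightarrow> \<not> (x div 2 - 3*y + 3*z) mod 4 = 2"
      using lin_tog[of y "x div 2" z] by blast
    then show ?thesis using that by (simp add: w \<sigma>_def P_def M_def)
  qed
  have A1: "g (f ((x,y,z),(b2,b3))) = ((x,y,z),(b2,b3)) \<and> f ((x,y,z),(b2,b3)) \<in> S"
    if h: "(x,y,z) \<in> M" "P (x,y,z)" for x y z b2 b3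
  proof -
    obtain v where v: "odd v" "x = 2*(2*v + 3*y - 3*z)" "odd (2*v + 3*y - 4*z)"
        "(x div 2 - 3*y + 3*z) div 2 = v" "x div 2 = 2*v + 3*y - 3*z" using fwd[OF h] by blast
    have f1: "f ((x,y,z),(b2,b3)) = (3*v + 8*y, sg b2 v, sg b3 (2*v + 3*y - 4*z))"
      unfolding f_def using v by (simp add: Let_def)
    have d1: "8 dvd (3*(3*v + 8*y) + 7*v)" "\<not> 8 dvd (3*(3*v + 8*y) + 7*(-v))" using v(1) by presburger+
    have d2: "32 dvd (3*(3*v + 8*y) + 7*v - 8*(2*v + 3*y - 4*z))"
      "\<not> 32 dvd (3*(3*v + 8*y) + 7*v - 8*(-(2*v + 3*y - 4*z)))" using v(3) by presburger+
    have e: "(3*(3*v + 8*y) + 7*v - 8*(2*v + 3*y - 4*z)) div 32 = z"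
      "(3*v + 8*y - 3*v) div 8 = y" "2*(z + (2*v + 3*y - 4*z)) = x" using v(2) by simp_all
    have 1: "g (f ((x,y,z),(b2,b3))) = ((x,y,z),(b2,b3))"
      unfolding f1 g_def using d1 d2 e by (cases b2; cases b3) (simp_all add: sg_def Let_def)
    have "m = x^2 + 7*y^2 + 12*z^2" using h(1) by (simp add: M_def)
    then have 2: "f ((x,y,z),(b2,b3)) \<in> S" unfolding f1 S_def using v ident[of v y z] by simp
    from 1 2 show ?thesis by blast
  qed
  have A2: "f (g (u,v,w)) = (u,v,w) \<and> g (u,v,w) \<in> {w\<in>M. P w} \<times> UNIV"
    if h: "(u,v,w) \<in> S" for u v w
  proof -
    have ou: "odd u" and ov: "odd v" and ow: "odd w" and eq: "u^2 + 7*v^2 + 12*w^2 = 4*m"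
      using h by (auto simp: S_def)
    obtain k2 where k2: "v^2 = 8*k2+1" using odd_sq[OF ov] by blast
    obtain k3 where k3: "w^2 = 8*k3+1" using odd_sq[OF ow] by blast
    have mj: "m = 8*(m div 8) + 3" using m8 by presburger
    have p1: "(3*u+7*v)*(3*u-7*v) = 9*u^2 - 49*v^2" by (simp add: algebra_simps power2_eq_square)
    have "(3*u+7*v)*(3*u-7*v) = 288*(m div 8) - 896*k2 - 864*k3 - 112"
      using p1 eq k2 k3 mj by linarith
    then have pr: "((3*u+7*v)*(3*u-7*v)) mod 32 = 16" using lin_p32 by blast
    have sm: "((3*u+7*v) + (3*u-7*v)) mod 4 = 2" using ou by presburger
    define b2 where "b2 = (\<not> 8 dvd (3*u + 7*v))"
    define v' where "v' = sg b2 v"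
    have X: "(3*u + 7*v') mod 16 = 8"
      using two_adic[OF pr sm] unfolding v'_def b2_def sg_def by (auto dest: lin_d8)
    define b3 where "b3 = (\<not> 32 dvd (3*u + 7*v' - 8*w))"
    define w' where "w' = sg b3 w"
    have d32: "32 dvd (3*u + 7*v' - 8*w')"
      unfolding w'_def b3_def sg_def using lin_w[OF X ow] by auto
    define z where "z = (3*u + 7*v' - 8*w') div 32"
    have ez: "3*u + 7*v' - 8*w' = 32*z" using d32 unfolding z_def by simp
    define y where "y = (u - 3*v') div 8"
    have ey: "u - 3*v' = 8*y" using lin_y[OF d32] unfolding y_def by simp
    have ov': "odd v'" using ov by (simp add: v'_def)
    have u_eq: "u = 3*v' + 8*y" using ey by simp
    have w_eq: "w' = 2*v' + 3*y - 4*z" using ez u_eq by simp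
    have gs0: "g (u,v,w) = ((2*(z + w'), y, z), (b2, b3))"
      unfolding g_def Let_def b2_def v'_def b3_def w'_def z_def y_def by simp
    have gs: "g (u,v,w) = ((2*(2*v' + 3*y - 3*z), y, z), (b2, b3))"
      unfolding gs0 w_eq by simp
    have eq': "u^2 + 7*v'^2 + 12*w'^2 = 4*m" using eq by (simp add: v'_def w'_def)
    have inM: "(2*(2*v' + 3*y - 3*z), y, z) \<in> M"
      using eq' ident[of v' y z] unfolding M_def u_eq w_eq by simp
    have inP: "P (2*(2*v' + 3*y - 3*z), y, z)" unfolding P_def using ov' by simp presburger
    have "f (g (u,v,w)) = (3*v'+8*y, sg b2 v', sg b3 (2*v'+3*y-4*z))"
      unfolding gs f_def by (simp add: Let_def)
    also have "\<dots> = (u,v,w)" unfolding w_eq[symmetric] u_eq[symmetric] by (simp add: v'_def w'_def)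
    finally have fg: "f (g (u,v,w)) = (u,v,w)" .
    show ?thesis using fg gs inM inP by simp
  qed
  have bij: "bij_betw f ({w\<in>M. P w} \<times> (UNIV::(bool\<times>bool) set)) S"
  proof (rule bij_betw_byWitness[where f'=g])
    show "\<forall>a\<in>{w\<in>M. P w} \<times> UNIV. g (f a) = a" using A1 by auto
    show "\<forall>a\<in>S. f (g a) = a" using A2 by auto
    show "f ` ({w\<in>M. P w} \<times> UNIV) \<subseteq> S" using A1 by auto
    show "g ` S \<subseteq> {w\<in>M. P w} \<times> UNIV"
    proof
      fix s assume "s \<in> g ` S"
      then obtain u v w where "(u,v,w) \<in> S" "s = g (u,v,w)" by auto
      then show "s \<in> {w\<in>M. P w} \<times> UNIV" using A2 by blast
    qed
  qed
  have "card S = 2 * card M" by (rule count4[OF sig bij]) 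
  then show ?thesis by (simp add: S_def M_def)
qed



lemma res4: "rx \<in> {0..3} \<Longrightarrow> ry \<in> {0..3} \<Longrightarrow> rz \<in> {0..3} \<Longrightarrow>
  (3*(rx^2 mod 8) + 4*(ry^2 mod 8) + 21*(rz^2 mod 8)) mod 8 = (1::int) \<Longrightarrow>
  (rx = 0 \<or> rx = 2) \<and> (rz = 1 \<or> rz = 3) \<and> ((rx = 0 \<and> (ry = 1 \<or> ry = 3)) \<or> (rx = 2 \<and> (ry = 0 \<or> ry = 2)))"
proof -
  assume "rx \<in> {0..3}" "ry \<in> {0..3}" "rz \<in> {0..3}" and h: "(3*(rx^2 mod 8) + 4*(ry^2 mod 8) + 21*(rz^2 mod 8)) mod 8 = (1::int)"
  then have "rx = 0 \<or> rx = 1 \<or> rx = 2 \<or> rx = 3" "ry = 0 \<or> ry = 1 \<or> ry = 2 \<or> ry = 3" "rz = 0 \<or> rz = 1 \<or> rz = 2 \<or> rz = 3" by auto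
  then show ?thesis using h by (elim disjE) simp_all
qed

lemma M4_facts:
  fixes x y z m :: int
  assumes "m = 3*x^2 + 4*y^2 + 21*z^2" "m mod 8 = 1"
  shows "even x \<and> odd z \<and> odd (x div 2 + y)"
proof -
  note q = quad_mod8[OF assms(1)]
  have h: "(3*((x mod 4)^2 mod 8) + 4*((y mod 4)^2 mod 8) + 21*((z mod 4)^2 mod 8)) mod 8 = 1"
    unfolding q[symmetric] by (rule assms(2))
  have r: "(x mod 4 = 0 \<or> x mod 4 = 2) \<and> (z mod 4 = 1 \<or> z mod 4 = 3) \<and> ((x mod 4 = 0 \<and> (y mod 4 = 1 \<or> y mod 4 = 3)) \<or> (x mod 4 = 2 \<and> (y mod 4 = 0 \<or> y mod 4 = 2)))"
    by (rule res4[OF _ _ _ h]) simp_all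
  show ?thesis using pb1[of x] pb2[of z] pb3[of x y] r by blast
qed

lemma lin_tog4: "odd (z::int) \<Longrightarrow> odd (a + y) \<Longrightarrow> ((a + y - 3*(-z)) mod 4 = 2) = ((a + y - 3*z) mod 4 \<noteq> 2)"
proof -
  assume z: "odd (z::int)" and ay: "odd (a + y)"
  have e: "even (a + y - 3*z)" using z ay by simp
  have eq: "a + y - 3*(-z) = (a + y - 3*z) + 2*(3*z)" by simp
  show ?thesis unfolding eq by (rule tog_base[OF e]) (use z in simp)
qed
lemma lin_p32_4: "(p::int) = 96*j - 96*k2 - 896*k3 - 112 \<Longrightarrow> p mod 32 = 16"
proof -
  assume "p = 96*j - 96*k2 - 896*k3 - 112"
  then have h: "p = 16 + 32*(3*j - 3*k2 - 28*k3 - 4)" by simp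
  show ?thesis unfolding h mod_mult_self2 by simp
qed
lemma lin_w2: "(X::int) mod 16 = 8 \<Longrightarrow> odd w \<Longrightarrow> \<not> 32 dvd (X + 8*w) \<Longrightarrow> 32 dvd (X + 8*(-w))" by presburger
lemma lin_y4: "32 dvd ((3::int)*u + 7*w + 8*v) \<Longrightarrow> 8 dvd (u - 3*w)"
proof -
  assume "32 dvd ((3::int)*u + 7*w + 8*v)"
  then obtain k where k: "3*u + 7*w + 8*v = 32*k" by (auto elim: dvdE)
  then have "u - 3*w = 8*(12*k - u - 3*w - 3*v)" by simp
  then show ?thesis by (rule dvdI)
qed

lemma case4:
  fixes m :: int
  assumes m8: "m mod 8 = 1"
  shows "card {(u::int,v::int,w::int). odd u \<and> odd v \<and> odd w \<and> 3*u^2 + 4*v^2 + 21*w^2 = 4*m}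
       = 2 * card {(x::int,y::int,z::int). m = 3*x^2 + 4*y^2 + 21*z^2}"
proof -
  define M where "M = {(x::int,y::int,z::int). m = 3*x^2 + 4*y^2 + 21*z^2}"
  define S where "S = {(u::int,v::int,w::int). odd u \<and> odd v \<and> odd w \<and> 3*u^2 + 4*v^2 + 21*w^2 = 4*m}"
  define P where "P = (\<lambda>(x::int,y::int,z::int). (x div 2 + y - 3*z) mod 4 = 2)"
  define \<sigma> where "\<sigma> = (\<lambda>(x::int,y::int,z::int). (x,y,-z))"
  define f where "f = (\<lambda>((x::int,y::int,z::int),(b2::bool,b3::bool)).
      let w = (x div 2 + y - 3*z) div 2 in (3*w + 8*z, sg b2 (3*(x div 2) - y), sg b3 w))"
  define g where "g = (\<lambda>(u::int,v::int,w::int).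
      let b3 = \<not> 8 dvd (3*u + 7*w); w' = sg b3 w; b2 = \<not> 32 dvd (3*u + 7*w' + 8*v); v' = sg b2 v;
          q = (3*u + 7*w' + 8*v') div 32
      in ((2*q, 3*q - v', (u - 3*w') div 8), (b2, b3)))"
  have ident: "3*(3*w + 8*z)^2 + 4*(6*w - 4*y + 9*z)^2 + 21*w^2 = 4*(3*(2*(2*w - y + 3*z))^2 + 4*y^2 + 21*z^2)"
    for w y z :: int by (simp add: power2_eq_square algebra_simps)
  have fform: "f ((x,y,z),(b2,b3)) = (3*((x div 2 + y - 3*z) div 2) + 8*z, sg b2 (3*(x div 2) - y), sg b3 ((x div 2 + y - 3*z) div 2))"
    for x y z b2 b3 by (simp add: f_def Let_def)
  have fwd: "\<exists>w. odd w \<and> odd z \<and> x = 2*(2*w - y + 3*z) \<and>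
              (x div 2 + y - 3*z) div 2 = w \<and> x div 2 = 2*w - y + 3*z"
    if "(x,y,z) \<in> M" "P (x,y,z)" for x y z
  proof -
    have mf: "even x \<and> odd z \<and> odd (x div 2 + y)" using M4_facts m8 that(1) by (auto simp: M_def)
    then obtain a where a: "x = 2*a" by auto
    then have xa: "x div 2 = a" by simp
    have "(a + y - 3*z) mod 4 = 2" using that(2) xa by (simp add: P_def)
    then obtain w where w: "a + y - 3*z = 2*w" "odd w" using lin_m4 by blast
    moreover have "(x div 2 + y - 3*z) div 2 = w" using xa w(1) by simp
    ultimately show ?thesis using w a xa mf by (intro exI[of _ w]) auto
  qed
  have sig: "\<sigma> w \<in> M \<and> \<sigma> (\<sigma> w) = w \<and> (P (\<sigma> w) \<longleftrightarrow> \<not> P w)" if "w \<in> M" for w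
  proof -
    obtain x y z where w: "w = (x,y,z)" by (cases w) auto
    have mf: "even x \<and> odd z \<and> odd (x div 2 + y)" using M4_facts m8 that by (auto simp: M_def w)
    then have "(x div 2 + y - 3*(-z)) mod 4 = 2 \<longleftrightarrow> \<not> (x div 2 + y - 3*z) mod 4 = 2"
      using lin_tog4[of z "x div 2" y] by blast
    then show ?thesis using that by (simp add: w \<sigma>_def P_def M_def)
  qed
  have A1: "g (f ((x,y,z),(b2,b3))) = ((x,y,z),(b2,b3)) \<and> f ((x,y,z),(b2,b3)) \<in> S"
    if h: "(x,y,z) \<in> M" "P (x,y,z)" for x y z b2 b3
  proof -
    obtain w where w: "odd w" "odd z" "x = 2*(2*w - y + 3*z)"
        "(x div 2 + y - 3*z) div 2 = w" "x div 2 = 2*w - y + 3*z" using fwd[OF h] by blast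
    have f1: "f ((x,y,z),(b2,b3)) = (3*w + 8*z, sg b2 (6*w - 4*y + 9*z), sg b3 w)"
    proof -
      have hx: "3*(x div 2) - y = 6*w - 4*y + 9*z" using w(5) by simp
      have "f ((x,y,z),(b2,b3)) = (3*((x div 2 + y - 3*z) div 2) + 8*z, sg b2 (3*(x div 2) - y), sg b3 ((x div 2 + y - 3*z) div 2))"
        by (simp add: f_def Let_def)
      also have "\<dots> = (3*w + 8*z, sg b2 (6*w - 4*y + 9*z), sg b3 w)" by (simp only: w(4) hx)
      finally show ?thesis .
    qed
    have d1: "8 dvd (3*(3*w + 8*z) + 7*w)" "\<not> 8 dvd (3*(3*w + 8*z) + 7*(-w))" using w(1) by presburger+
    have d2: "32 dvd (3*(3*w + 8*z) + 7*w + 8*(6*w - 4*y + 9*z))"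
      "\<not> 32 dvd (3*(3*w + 8*z) + 7*w + 8*(-(6*w - 4*y + 9*z)))" using w(2) by presburger+
    have e: "(3*(3*w + 8*z) + 7*w + 8*(6*w - 4*y + 9*z)) div 32 = 2*w - y + 3*z"
      "(3*w + 8*z - 3*w) div 8 = z" "2*(2*w - y + 3*z) = x" "3*(2*w - y + 3*z) - (6*w - 4*y + 9*z) = y"
      using w(3) by simp_all
    have 1: "g (f ((x,y,z),(b2,b3))) = ((x,y,z),(b2,b3))"
      unfolding f1 g_def using d1 d2 e by (cases b2; cases b3) (simp_all add: sg_def Let_def)
    have "m = 3*x^2 + 4*y^2 + 21*z^2" using h(1) by (simp add: M_def)
    moreover have "odd (6*w - 4*y + 9*z)" using w(2) by presburger
    ultimately have 2: "f ((x,y,z),(b2,b3)) \<in> S" unfolding f1 S_def using w ident[of w z y] by simp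
    from 1 2 show ?thesis by blast
  qed
  have A2: "f (g (u,v,w)) = (u,v,w) \<and> g (u,v,w) \<in> {w\<in>M. P w} \<times> UNIV"
    if h: "(u,v,w) \<in> S" for u v w
  proof -
    have ou: "odd u" and ov: "odd v" and ow: "odd w" and eq: "3*u^2 + 4*v^2 + 21*w^2 = 4*m"
      using h by (auto simp: S_def)
    obtain k2 where k2: "v^2 = 8*k2+1" using odd_sq[OF ov] by blast
    obtain k3 where k3: "w^2 = 8*k3+1" using odd_sq[OF ow] by blast
    have mj: "m = 8*(m div 8) + 1" using m8 by presburger
    have p1: "(3*u+7*w)*(3*u-7*w) = 9*u^2 - 49*w^2" by (simp add: algebra_simps power2_eq_square)
    have "(3*u+7*w)*(3*u-7*w) = 96*(m div 8) - 96*k2 - 896*k3 - 112"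
      using p1 eq k2 k3 mj by linarith
    then have pr: "((3*u+7*w)*(3*u-7*w)) mod 32 = 16" using lin_p32_4 by blast
    have sm: "((3*u+7*w) + (3*u-7*w)) mod 4 = 2" using ou by presburger
    define b3 where "b3 = (\<not> 8 dvd (3*u + 7*w))"
    define w' where "w' = sg b3 w"
    have X: "(3*u + 7*w') mod 16 = 8"
      using two_adic[OF pr sm] unfolding w'_def b3_def sg_def by (auto dest: lin_d8)
    define b2 where "b2 = (\<not> 32 dvd (3*u + 7*w' + 8*v))"
    define v' where "v' = sg b2 v"
    have d32: "32 dvd (3*u + 7*w' + 8*v')"
      unfolding v'_def b2_def sg_def using lin_w2[OF X ov] by auto
    define q where "q = (3*u + 7*w' + 8*v') div 32"
    have eqq: "3*u + 7*w' + 8*v' = 32*q" using d32 unfolding q_def by simp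
    define z where "z = (u - 3*w') div 8"
    have ez: "u - 3*w' = 8*z" using lin_y4[OF d32] unfolding z_def by simp
    define y where "y = 3*q - v'"
    have ow': "odd w'" using ow by (simp add: w'_def)
    have u_eq: "u = 3*w' + 8*z" using ez by simp
    have q_eq: "q = 2*w' - y + 3*z" using eqq u_eq unfolding y_def by simp
    have v_eq: "v' = 6*w' - 4*y + 9*z" using q_eq unfolding y_def by simp
    have gs0: "g (u,v,w) = ((2*q, 3*q - v', z), (b2, b3))"
      unfolding g_def Let_def b2_def v'_def b3_def w'_def q_def z_def by simp
    have gs: "g (u,v,w) = ((2*(2*w' - y + 3*z), y, z), (b2, b3))"
    proof -
      have h1: "2*q = 2*(2*w' - y + 3*z)" using q_eq by simp
      have h2: "3*q - v' = y" by (simp add: y_def)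
      show ?thesis by (simp only: gs0 h1 h2)
    qed
    have eq': "3*u^2 + 4*v'^2 + 21*w'^2 = 4*m" using eq by (simp add: v'_def w'_def)
    have inM: "(2*(2*w' - y + 3*z), y, z) \<in> M"
      using eq' ident[of w' z y] unfolding M_def u_eq v_eq by simp
    have inP: "P (2*(2*w' - y + 3*z), y, z)" unfolding P_def using ow' by simp presburger
    have k1: "(2*(2*w' - y + 3*z)) div 2 = 2*w' - y + 3*z" by simp
    have k2: "(2*w' - y + 3*z + y - 3*z) div 2 = w'" by simp
    have k3: "3*(2*w' - y + 3*z) - y = 6*w' - 4*y + 9*z" by simp
    have "f (g (u,v,w)) = (3*w'+8*z, sg b2 (6*w' - 4*y + 9*z), sg b3 w')"
      by (simp only: gs fform k1 k2 k3)
    also have "\<dots> = (u,v,w)" unfolding v_eq[symmetric] u_eq[symmetric] by (simp add: v'_def w'_def)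
    finally have fg: "f (g (u,v,w)) = (u,v,w)" .
    show ?thesis using fg gs inM inP by simp
  qed
  have bij: "bij_betw f ({w\<in>M. P w} \<times> (UNIV::(bool\<times>bool) set)) S"
  proof (rule bij_betw_byWitness[where f'=g])
    show "\<forall>a\<in>{w\<in>M. P w} \<times> UNIV. g (f a) = a" using A1 by auto
    show "\<forall>a\<in>S. f (g a) = a" using A2 by auto
    show "f ` ({w\<in>M. P w} \<times> UNIV) \<subseteq> S" using A1 by auto
    show "g ` S \<subseteq> {w\<in>M. P w} \<times> UNIV"
    proof
      fix s assume "s \<in> g ` S"
      then obtain u v w where "(u,v,w) \<in> S" "s = g (u,v,w)" by auto
      then show "s \<in> {w\<in>M. P w} \<times> UNIV" using A2 by blast
    qed
  qed
  have "card S = 2 * card M" by (rule count4[OF sig bij]) 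
  then show ?thesis by (simp add: S_def M_def)
qed



lemma res5: "rx \<in> {0..3} \<Longrightarrow> ry \<in> {0..3} \<Longrightarrow> rz \<in> {0..3} \<Longrightarrow>
  (3*(rx^2 mod 8) + 21*(ry^2 mod 8) + 28*(rz^2 mod 8)) mod 8 = (7::int) \<Longrightarrow>
  (rx = 1 \<or> rx = 3) \<and> (ry = 0 \<or> ry = 2) \<and> ((ry = 0 \<and> (rz = 1 \<or> rz = 3)) \<or> (ry = 2 \<and> (rz = 0 \<or> rz = 2)))"
proof -
  assume "rx \<in> {0..3}" "ry \<in> {0..3}" "rz \<in> {0..3}" and h: "(3*(rx^2 mod 8) + 21*(ry^2 mod 8) + 28*(rz^2 mod 8)) mod 8 = (7::int)"
  then have "rx = 0 \<or> rx = 1 \<or> rx = 2 \<or> rx = 3" "ry = 0 \<or> ry = 1 \<or> ry = 2 \<or> ry = 3" "rz = 0 \<or> rz = 1 \<or> rz = 2 \<or> rz = 3" by auto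
  then show ?thesis using h by (elim disjE) simp_all
qed

lemma M5_facts:
  fixes x y z m :: int
  assumes "m = 3*x^2 + 21*y^2 + 28*z^2" "m mod 8 = 7"
  shows "odd x \<and> even y \<and> odd (y div 2 + z)"
proof -
  note q = quad_mod8[OF assms(1)]
  have h: "(3*((x mod 4)^2 mod 8) + 21*((y mod 4)^2 mod 8) + 28*((z mod 4)^2 mod 8)) mod 8 = 7"
    unfolding q[symmetric] by (rule assms(2))
  have r: "(x mod 4 = 1 \<or> x mod 4 = 3) \<and> (y mod 4 = 0 \<or> y mod 4 = 2) \<and> ((y mod 4 = 0 \<and> (z mod 4 = 1 \<or> z mod 4 = 3)) \<or> (y mod 4 = 2 \<and> (z mod 4 = 0 \<or> z mod 4 = 2)))"
    by (rule res5[OF _ _ _ h]) simp_all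
  show ?thesis using pb2[of x] pb1[of y] pb3[of y z] r by blast
qed

lemma lin_tog5: "odd (x::int) \<Longrightarrow> odd (b + z) \<Longrightarrow> ((-x - 3*b - 3*z) mod 4 = 2) = ((x - 3*b - 3*z) mod 4 \<noteq> 2)"
proof -
  assume x: "odd (x::int)" and bz: "odd (b + z)"
  have e: "even (x - 3*b - 3*z)" using x bz by simp
  have eq: "-x - 3*b - 3*z = (x - 3*b - 3*z) + 2*(-x)" by simp
  show ?thesis unfolding eq by (rule tog_base[OF e]) (use x in simp)
qed
lemma lin_o5: "odd ((b::int) + z) \<Longrightarrow> odd (3*b - z)" by presburger
lemma lin_w5: "(X::int) mod 16 = 8 \<Longrightarrow> odd w \<Longrightarrow> \<not> 32 dvd (X + 8*w) \<Longrightarrow> 32 dvd (X + 8*(-w))" by presburger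
lemma lin_p32_5: "3*(p::int) = 32*j - 384*k2 - 224*k3 - 48 \<Longrightarrow> p mod 32 = 16"
proof -
  assume "3*(p::int) = 32*j - 384*k2 - 224*k3 - 48"
  then have h: "p = 16 + 32*(11*(j - 12*k2 - 7*k3 - 2) - p + 5)" by simp
  show ?thesis by (subst h) (simp only: mod_mult_self2, simp)
qed

lemma case5:
  fixes m :: int
  assumes m8: "m mod 8 = 7"
  shows "card {(u::int,v::int,w::int). odd u \<and> odd v \<and> odd w \<and> 3*u^2 + 21*v^2 + 28*w^2 = 4*m}
       = 2 * card {(x::int,y::int,z::int). m = 3*x^2 + 21*y^2 + 28*z^2}"
proof -
  define M where "M = {(x::int,y::int,z::int). m = 3*x^2 + 21*y^2 + 28*z^2}"
  define S where "S = {(u::int,v::int,w::int). odd u \<and> odd v \<and> odd w \<and> 3*u^2 + 21*v^2 + 28*w^2 = 4*m}"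
  define P where "P = (\<lambda>(x::int,y::int,z::int). (x - 3*(y div 2) - 3*z) mod 4 = 2)"
  define \<sigma> where "\<sigma> = (\<lambda>(x::int,y::int,z::int). (-x,y,z))"
  define f where "f = (\<lambda>((x::int,y::int,z::int),(b2::bool,b3::bool)).
      let v = (x - 3*(y div 2) - 3*z) div 2 in (3*v + 8*(y div 2 + z), sg b2 v, sg b3 (3*(y div 2) - z)))"
  define g where "g = (\<lambda>(u::int,v::int,w::int).
      let b2 = \<not> 8 dvd (u - 3*v); v' = sg b2 v; b3 = \<not> 32 dvd (u - 3*v' + 8*w); w' = sg b3 w;
          q = (u - 3*v' + 8*w') div 32
      in ((2*v' + 12*q - 3*w', 2*q, 3*q - w'), (b2, b3)))"
  have ident: "3*(3*v + 8*(b + z))^2 + 21*v^2 + 28*(3*b - z)^2 = 4*(3*(2*v + 3*b + 3*z)^2 + 21*(2*b)^2 + 28*z^2)"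
    for v b z :: int by (simp add: power2_eq_square algebra_simps)
  have fform: "f ((x,y,z),(b2,b3)) = (3*((x - 3*(y div 2) - 3*z) div 2) + 8*(y div 2 + z),
        sg b2 ((x - 3*(y div 2) - 3*z) div 2), sg b3 (3*(y div 2) - z))"
    for x y z b2 b3 by (simp add: f_def Let_def)
  have fwd: "\<exists>v b. odd v \<and> odd (b + z) \<and> y = 2*b \<and> x = 2*v + 3*b + 3*z \<and>
              y div 2 = b \<and> (x - 3*b - 3*z) div 2 = v"
    if "(x,y,z) \<in> M" "P (x,y,z)" for x y z
  proof -
    have mf: "odd x \<and> even y \<and> odd (y div 2 + z)" using M5_facts m8 that(1) by (auto simp: M_def)
    then obtain b where b: "y = 2*b" by auto
    then have yb: "y div 2 = b" by simp
    have "(x - 3*b - 3*z) mod 4 = 2" using that(2) yb by (simp add: P_def)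
    then obtain v where v: "x - 3*b - 3*z = 2*v" "odd v" using lin_m4 by blast
    moreover have "(x - 3*b - 3*z) div 2 = v" using v(1) by simp
    moreover have "odd (b + z)" using mf yb by simp
    ultimately show ?thesis using v b yb by (intro exI[of _ v] exI[of _ b]) auto
  qed
  have sig: "\<sigma> w \<in> M \<and> \<sigma> (\<sigma> w) = w \<and> (P (\<sigma> w) \<longleftrightarrow> \<not> P w)" if "w \<in> M" for w
  proof -
    obtain x y z where w: "w = (x,y,z)" by (cases w) auto
    have mf: "odd x \<and> even y \<and> odd (y div 2 + z)" using M5_facts m8 that by (auto simp: M_def w)
    then have "(-x - 3*(y div 2) - 3*z) mod 4 = 2 \<longleftrightarrow> \<not> (x - 3*(y div 2) - 3*z) mod 4 = 2"
      using lin_tog5[of x "y div 2" z] by blast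
    then show ?thesis using that by (simp add: w \<sigma>_def P_def M_def)
  qed
  have A1: "g (f ((x,y,z),(b2,b3))) = ((x,y,z),(b2,b3)) \<and> f ((x,y,z),(b2,b3)) \<in> S"
    if h: "(x,y,z) \<in> M" "P (x,y,z)" for x y z b2 b3
  proof -
    obtain v b where vb: "odd v" "odd (b + z)" "y = 2*b" "x = 2*v + 3*b + 3*z"
        "y div 2 = b" "(x - 3*b - 3*z) div 2 = v" using fwd[OF h] by blast
    have f1: "f ((x,y,z),(b2,b3)) = (3*v + 8*(b + z), sg b2 v, sg b3 (3*b - z))"
      by (simp only: fform vb(5) vb(6))
    have d1: "8 dvd (3*v + 8*(b + z) - 3*v)" "\<not> 8 dvd (3*v + 8*(b + z) - 3*(-v))" using vb(1) by presburger+
    have d2: "32 dvd (3*v + 8*(b + z) - 3*v + 8*(3*b - z))"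
      "\<not> 32 dvd (3*v + 8*(b + z) - 3*v + 8*(-(3*b - z)))" using vb(2) by presburger+
    have e: "(3*v + 8*(b + z) - 3*v + 8*(3*b - z)) div 32 = b"
      "2*v + 12*b - 3*(3*b - z) = x" "2*b = y" "3*b - (3*b - z) = z"
      using vb(3,4) by simp_all
    have 1: "g (f ((x,y,z),(b2,b3))) = ((x,y,z),(b2,b3))"
      unfolding f1 g_def using d1 d2 e by (cases b2; cases b3) (simp_all add: sg_def Let_def)
    have "m = 3*x^2 + 21*y^2 + 28*z^2" using h(1) by (simp add: M_def)
    moreover have "odd (3*v + 8*(b + z))" "odd (3*b - z)" using vb(1) lin_o5[OF vb(2)] by presburger+
    ultimately have 2: "f ((x,y,z),(b2,b3)) \<in> S" unfolding f1 S_def using vb ident[of v b z] by simp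
    from 1 2 show ?thesis by blast
  qed
  have A2: "f (g (u,v,w)) = (u,v,w) \<and> g (u,v,w) \<in> {w\<in>M. P w} \<times> UNIV"
    if h: "(u,v,w) \<in> S" for u v w
  proof -
    have ou: "odd u" and ov: "odd v" and ow: "odd w" and eq: "3*u^2 + 21*v^2 + 28*w^2 = 4*m"
      using h by (auto simp: S_def)
    obtain k2 where k2: "v^2 = 8*k2+1" using odd_sq[OF ov] by blast
    obtain k3 where k3: "w^2 = 8*k3+1" using odd_sq[OF ow] by blast
    have mj: "m = 8*(m div 8) + 7" using m8 by presburger
    have p1: "3*((u-3*v)*(u+3*v)) = 3*u^2 - 27*v^2" by (simp add: algebra_simps power2_eq_square)
    have "3*((u-3*v)*(u+3*v)) = 32*(m div 8) - 384*k2 - 224*k3 - 48"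
      using p1 eq k2 k3 mj by linarith
    then have pr: "((u-3*v)*(u+3*v)) mod 32 = 16" using lin_p32_5 by blast
    have sm: "((u-3*v) + (u+3*v)) mod 4 = 2" using ou by presburger
    define b2 where "b2 = (\<not> 8 dvd (u - 3*v))"
    define v' where "v' = sg b2 v"
    have X: "(u - 3*v') mod 16 = 8"
      using two_adic[OF pr sm] unfolding v'_def b2_def sg_def by (auto dest: lin_d8)
    define b3 where "b3 = (\<not> 32 dvd (u - 3*v' + 8*w))"
    define w' where "w' = sg b3 w"
    have d32: "32 dvd (u - 3*v' + 8*w')"
      unfolding w'_def b3_def sg_def using lin_w5[OF X ow] by auto
    define q where "q = (u - 3*v' + 8*w') div 32"
    have eqq: "u - 3*v' + 8*w' = 32*q" using d32 unfolding q_def by simp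
    define z where "z = 3*q - w'"
    have ov': "odd v'" using ov by (simp add: v'_def)
    have u_eq: "u = 3*v' + 8*(q + z)" using eqq unfolding z_def by simp
    have w_eq: "w' = 3*q - z" unfolding z_def by simp
    have gs0: "g (u,v,w) = ((2*v' + 12*q - 3*w', 2*q, 3*q - w'), (b2, b3))"
      unfolding g_def Let_def b2_def v'_def b3_def w'_def q_def by simp
    have gs: "g (u,v,w) = ((2*v' + 3*q + 3*z, 2*q, z), (b2, b3))"
    proof -
      have h1: "2*v' + 12*q - 3*w' = 2*v' + 3*q + 3*z" unfolding z_def by simp
      have h2: "3*q - w' = z" by (simp add: z_def)
      show ?thesis by (simp only: gs0 h1 h2)
    qed
    have eq': "3*u^2 + 21*v'^2 + 28*w'^2 = 4*m" using eq by (simp add: v'_def w'_def)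
    have inM: "(2*v' + 3*q + 3*z, 2*q, z) \<in> M"
      using eq' ident[of v' q z] unfolding M_def u_eq w_eq by simp
    have inP: "P (2*v' + 3*q + 3*z, 2*q, z)" unfolding P_def using ov' by simp presburger
    have k1: "(2*q) div 2 = q" by simp
    have k2: "(2*v' + 3*q + 3*z - 3*q - 3*z) div 2 = v'" by simp
    have "f (g (u,v,w)) = (3*v' + 8*(q + z), sg b2 v', sg b3 (3*q - z))"
      by (simp only: gs fform k1 k2)
    also have "\<dots> = (u,v,w)" unfolding w_eq[symmetric] u_eq[symmetric] by (simp add: v'_def w'_def)
    finally have fg: "f (g (u,v,w)) = (u,v,w)" .
    show ?thesis using fg gs inM inP by simp
  qed
  have bij: "bij_betw f ({w\<in>M. P w} \<times> (UNIV::(bool\<times>bool) set)) S"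
  proof (rule bij_betw_byWitness[where f'=g])
    show "\<forall>a\<in>{w\<in>M. P w} \<times> UNIV. g (f a) = a" using A1 by auto
    show "\<forall>a\<in>S. f (g a) = a" using A2 by auto
    show "f ` ({w\<in>M. P w} \<times> UNIV) \<subseteq> S" using A1 by auto
    show "g ` S \<subseteq> {w\<in>M. P w} \<times> UNIV"
    proof
      fix s assume "s \<in> g ` S"
      then obtain u v w where "(u,v,w) \<in> S" "s = g (u,v,w)" by auto
      then show "s \<in> {w\<in>M. P w} \<times> UNIV" using A2 by blast
    qed
  qed
  have "card S = 2 * card M" by (rule count4[OF sig bij]) 
  then show ?thesis by (simp add: S_def M_def)
qed



lemma prod8_res0: "(a::int) \<in> {0..7} \<Longrightarrow> b \<in> {0..7} \<Longrightarrow> odd a \<Longrightarrow> (a*b) mod 8 = 0 \<Longrightarrow> b = 0"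
proof -
  assume a: "a \<in> {0..7}" and b: "b \<in> {0..7}" and "odd a" and h: "(a*b) mod 8 = 0"
  have "a = 1 \<or> a = 3 \<or> a = 5 \<or> a = 7" using a \<open>odd a\<close> by auto presburger
  moreover have "b = 0 \<or> b = 1 \<or> b = 2 \<or> b = 3 \<or> b = 4 \<or> b = 5 \<or> b = 6 \<or> b = 7" using b by auto
  ultimately show "b = 0" using h by (elim disjE) simp_all
qed

lemma prod8_0: assumes "((A::int)*B) mod 8 = 0" "odd A" shows "B mod 8 = 0"
proof -
  have o: "A mod 8 mod 2 = 1" using assms(2) by (simp add: odd_iff_mod_2_eq_one mod_mod_cancel)
  have e: "((A mod 8) * (B mod 8)) mod 8 = 0" using assms(1) by (simp add: mod_mult_eq)
  show ?thesis by (rule prod8_res0[OF _ _ _ e]) (use o in \<open>auto simp: odd_iff_mod_2_eq_one\<close>)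
qed

lemma two_adic0:
  fixes A B :: int
  assumes "(A*B) mod 32 = 0" "(A+B) mod 4 = 2"
  shows "16 dvd A \<or> 16 dvd B"
proof -
  have ev: "\<And>p::int. p mod 32 = 0 \<Longrightarrow> even p" by presburger
  have "even A"
  proof (rule ccontr)
    assume "odd A"
    then have "odd B" using assms(2) by presburger
    with \<open>odd A\<close> have "odd (A*B)" by simp
    then show False using ev[OF assms(1)] by simp
  qed
  then obtain A' where A: "A = 2*A'" by auto
  have "even B" using \<open>even A\<close> assms(2) by presburger
  then obtain B' where B: "B = 2*B'" by auto
  have q4: "(4*(A'*B')) mod 32 = 0" using assms(1) A B by (simp add: algebra_simps)
  have l4: "\<And>p::int. (4*p) mod 32 = 0 \<Longrightarrow> p mod 8 = 0" by presburger
  have p: "(A'*B') mod 8 = 0" by (rule l4[OF q4])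
  have "odd (A' + B')" using assms(2) A B by presburger
  then consider "odd A'" | "odd B'" by auto
  then show ?thesis
  proof cases
    case 1
    then have b4: "B' mod 8 = 0" using prod8_0[OF p] by simp
    have "16 dvd B" using B b4 by presburger
    then show ?thesis by simp
  next
    case 2
    then have a4: "A' mod 8 = 0" using prod8_0[of B' A'] p by (simp add: mult.commute)
    have "16 dvd A" using A a4 by presburger
    then show ?thesis by simp
  qed
qed

lemma res1: "rx \<in> {0..3} \<Longrightarrow> ry \<in> {0..3} \<Longrightarrow> rz \<in> {0..3} \<Longrightarrow>
  (1*(rx^2 mod 8) + 4*(ry^2 mod 8) + 7*(rz^2 mod 8)) mod 8 = (5::int) \<Longrightarrow>
  (rx = 1 \<or> rx = 3) \<and> (rz = 0 \<or> rz = 2) \<and> ((rz = 0 \<and> (ry = 1 \<or> ry = 3)) \<or> (rz = 2 \<and> (ry = 0 \<or> ry = 2)))"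
proof -
  assume "rx \<in> {0..3}" "ry \<in> {0..3}" "rz \<in> {0..3}" and h: "(1*(rx^2 mod 8) + 4*(ry^2 mod 8) + 7*(rz^2 mod 8)) mod 8 = (5::int)"
  then have "rx = 0 \<or> rx = 1 \<or> rx = 2 \<or> rx = 3" "ry = 0 \<or> ry = 1 \<or> ry = 2 \<or> ry = 3" "rz = 0 \<or> rz = 1 \<or> rz = 2 \<or> rz = 3" by auto
  then show ?thesis using h by (elim disjE) simp_all
qed

lemma res3: "rx \<in> {0..3} \<Longrightarrow> ry \<in> {0..3} \<Longrightarrow> rz \<in> {0..3} \<Longrightarrow>
  (1*(rx^2 mod 8) + 7*(ry^2 mod 8) + 28*(rz^2 mod 8)) mod 8 = (3::int) \<Longrightarrow>
  (rx = 0 \<or> rx = 2) \<and> (ry = 1 \<or> ry = 3) \<and> ((rx = 0 \<and> (rz = 1 \<or> rz = 3)) \<or> (rx = 2 \<and> (rz = 0 \<or> rz = 2)))"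
proof -
  assume "rx \<in> {0..3}" "ry \<in> {0..3}" "rz \<in> {0..3}" and h: "(1*(rx^2 mod 8) + 7*(ry^2 mod 8) + 28*(rz^2 mod 8)) mod 8 = (3::int)"
  then have "rx = 0 \<or> rx = 1 \<or> rx = 2 \<or> rx = 3" "ry = 0 \<or> ry = 1 \<or> ry = 2 \<or> ry = 3" "rz = 0 \<or> rz = 1 \<or> rz = 2 \<or> rz = 3" by auto
  then show ?thesis using h by (elim disjE) simp_all
qed

lemma M1_facts:
  fixes x y z m :: int
  assumes "m = x^2 + 4*y^2 + 7*z^2" "m mod 8 = 5"
  shows "odd x \<and> even z \<and> odd (z div 2 + y)"
proof -
  have "m = 1*x^2 + 4*y^2 + 7*z^2" using assms(1) by (simp only: mult_1)
  note q = quad_mod8[OF this]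
  have h: "(1*((x mod 4)^2 mod 8) + 4*((y mod 4)^2 mod 8) + 7*((z mod 4)^2 mod 8)) mod 8 = 5"
    unfolding q[symmetric] by (rule assms(2))
  have r: "(x mod 4 = 1 \<or> x mod 4 = 3) \<and> (z mod 4 = 0 \<or> z mod 4 = 2) \<and> ((z mod 4 = 0 \<and> (y mod 4 = 1 \<or> y mod 4 = 3)) \<or> (z mod 4 = 2 \<and> (y mod 4 = 0 \<or> y mod 4 = 2)))"
    by (rule res1[OF _ _ _ h]) simp_all
  show ?thesis using pb2[of x] pb1[of z] pb3[of z y] r by blast
qed

lemma M3_facts:
  fixes x y z m :: int
  assumes "m = x^2 + 7*y^2 + 28*z^2" "m mod 8 = 3"
  shows "even x \<and> odd y \<and> odd (x div 2 + z)"
proof -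
  have "m = 1*x^2 + 7*y^2 + 28*z^2" using assms(1) by (simp only: mult_1)
  note q = quad_mod8[OF this]
  have h: "(1*((x mod 4)^2 mod 8) + 7*((y mod 4)^2 mod 8) + 28*((z mod 4)^2 mod 8)) mod 8 = 3"
    unfolding q[symmetric] by (rule assms(2))
  have r: "(x mod 4 = 0 \<or> x mod 4 = 2) \<and> (y mod 4 = 1 \<or> y mod 4 = 3) \<and> ((x mod 4 = 0 \<and> (z mod 4 = 1 \<or> z mod 4 = 3)) \<or> (x mod 4 = 2 \<and> (z mod 4 = 0 \<or> z mod 4 = 2)))"
    by (rule res3[OF _ _ _ h]) simp_all
  show ?thesis using pb1[of x] pb2[of y] pb3[of x z] r by blast
qed

lemma lin_p0_1: "(p::int) = 32*j - 32*k2 - 128*k3 \<Longrightarrow> p mod 32 = 0"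
proof -
  assume "p = 32*j - 32*k2 - 128*k3"
  then have h: "p = 0 + 32*(j - k2 - 4*k3)" by simp
  show ?thesis unfolding h mod_mult_self2 by simp
qed
lemma lin_p0_3: "(p::int) = 32*j - 128*k2 - 224*k3 - 32 \<Longrightarrow> p mod 32 = 0"
proof -
  assume "p = 32*j - 128*k2 - 224*k3 - 32"
  then have h: "p = 0 + 32*(j - 4*k2 - 7*k3 - 1)" by simp
  show ?thesis unfolding h mod_mult_self2 by simp
qed
lemma lin_n16: "odd ((c::int) + y) \<Longrightarrow> \<not> 16 dvd (3*y + 7*c - 3*(-(y - 3*c)))" by presburger
lemma lin_n16b: "odd ((a::int) + z) \<Longrightarrow> \<not> 16 dvd (3*a + 7*z - 3*(-(a - 3*z)))" by presburger

lemma case1: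
  fixes m :: int
  assumes m8: "m mod 8 = 5"
  shows "card {(u::int,v::int,w::int). odd u \<and> odd v \<and> odd w \<and> u^2 + 4*v^2 + 7*w^2 = 4*m}
       = 2 * card {(x::int,y::int,z::int). m = x^2 + 4*y^2 + 7*z^2}"
proof -
  define M where "M = {(x::int,y::int,z::int). m = x^2 + 4*y^2 + 7*z^2}"
  define S where "S = {(u::int,v::int,w::int). odd u \<and> odd v \<and> odd w \<and> u^2 + 4*v^2 + 7*w^2 = 4*m}"
  define f where "f = (\<lambda>((x::int,y::int,z::int),b::bool). (3*y + 7*(z div 2), x, sg b (y - 3*(z div 2))))"
  define g where "g = (\<lambda>(u::int,v::int,w::int).
      let b = \<not> 16 dvd (u - 3*w); w' = sg b w; c = (u - 3*w') div 16
      in ((v, 3*c + w', 2*c), b))"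
  have ident: "(3*y + 7*c)^2 + 4*x^2 + 7*(y - 3*c)^2 = 4*(x^2 + 4*y^2 + 7*(2*c)^2)"
    for x y c :: int by (simp add: power2_eq_square algebra_simps)
  have fform: "f ((x,y,z),b) = (3*y + 7*(z div 2), x, sg b (y - 3*(z div 2)))" for x y z b
    by (simp add: f_def)
  have A1: "g (f ((x,y,z),b)) = ((x,y,z),b) \<and> f ((x,y,z),b) \<in> S"
    if h: "(x,y,z) \<in> M" for x y z b
  proof -
    have mf: "odd x \<and> even z \<and> odd (z div 2 + y)" using M1_facts m8 h by (auto simp: M_def)
    then obtain c where c: "z = 2*c" by auto
    then have zc: "z div 2 = c" by simp
    have oc: "odd (c + y)" using mf zc by simp
    have f1: "f ((x,y,z),b) = (3*y + 7*c, x, sg b (y - 3*c))" by (simp only: fform zc)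
    have d1: "16 dvd (3*y + 7*c - 3*(y - 3*c))" by simp
    have d2: "\<not> 16 dvd (3*y + 7*c - 3*(-(y - 3*c)))" by (rule lin_n16[OF oc])
    have e: "(3*y + 7*c - 3*(y - 3*c)) div 16 = c" "3*c + (y - 3*c) = y" "2*c = z" using c by simp_all
    have 1: "g (f ((x,y,z),b)) = ((x,y,z),b)"
      unfolding f1 g_def using d1 d2 e by (cases b) (simp_all add: sg_def Let_def)
    have "m = x^2 + 4*y^2 + 7*z^2" using h by (simp add: M_def)
    moreover have "odd (3*y + 7*c)" "odd (y - 3*c)" using oc by presburger+
    ultimately have 2: "f ((x,y,z),b) \<in> S" unfolding f1 S_def using mf c ident[of y c x] by simp
    from 1 2 show ?thesis by blast
  qed
  have A2: "f (g (u,v,w)) = (u,v,w) \<and> g (u,v,w) \<in> M \<times> UNIV"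
    if h: "(u,v,w) \<in> S" for u v w
  proof -
    have ou: "odd u" and ov: "odd v" and ow: "odd w" and eq: "u^2 + 4*v^2 + 7*w^2 = 4*m"
      using h by (auto simp: S_def)
    obtain k2 where k2: "v^2 = 8*k2+1" using odd_sq[OF ov] by blast
    obtain k3 where k3: "w^2 = 8*k3+1" using odd_sq[OF ow] by blast
    have mj: "m = 8*(m div 8) + 5" using m8 by presburger
    have p1: "(u-3*w)*(u+3*w) = u^2 - 9*w^2" by (simp add: algebra_simps power2_eq_square)
    have "(u-3*w)*(u+3*w) = 32*(m div 8) - 32*k2 - 128*k3"
      using p1 eq k2 k3 mj by linarith
    then have pr: "((u-3*w)*(u+3*w)) mod 32 = 0" using lin_p0_1 by blast
    have sm: "((u-3*w) + (u+3*w)) mod 4 = 2" using ou by presburger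
    define b where "b = (\<not> 16 dvd (u - 3*w))"
    define w' where "w' = sg b w"
    have d16: "16 dvd (u - 3*w')"
      using two_adic0[OF pr sm] unfolding w'_def b_def sg_def by auto
    define c where "c = (u - 3*w') div 16"
    have ec: "u - 3*w' = 16*c" using d16 unfolding c_def by simp
    define y where "y = 3*c + w'"
    have u_eq: "u = 3*y + 7*c" using ec unfolding y_def by simp
    have w_eq: "w' = y - 3*c" unfolding y_def by simp
    have gs: "g (u,v,w) = ((v, y, 2*c), b)"
      unfolding g_def Let_def b_def w'_def c_def y_def by simp
    have eq': "u^2 + 4*v^2 + 7*w'^2 = 4*m" using eq by (simp add: w'_def)
    have inM: "(v, y, 2*c) \<in> M"
      using eq' ident[of y c v] unfolding M_def u_eq w_eq by simp
    have k1: "(2*c) div 2 = c" by simp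
    have "f (g (u,v,w)) = (3*y + 7*c, v, sg b (y - 3*c))"
      by (simp only: gs fform k1)
    also have "\<dots> = (u,v,w)" unfolding w_eq[symmetric] u_eq[symmetric] by (simp add: w'_def)
    finally have fg: "f (g (u,v,w)) = (u,v,w)" .
    show ?thesis using fg gs inM by simp
  qed
  have bij: "bij_betw f (M \<times> (UNIV::bool set)) S"
  proof (rule bij_betw_byWitness[where f'=g])
    show "\<forall>a\<in>M \<times> UNIV. g (f a) = a" using A1 by auto
    show "\<forall>a\<in>S. f (g a) = a" using A2 by auto
    show "f ` (M \<times> UNIV) \<subseteq> S" using A1 by auto
    show "g ` S \<subseteq> M \<times> UNIV"
    proof
      fix s assume "s \<in> g ` S"
      then obtain u v w where "(u,v,w) \<in> S" "s = g (u,v,w)" by auto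
      then show "s \<in> M \<times> UNIV" using A2 by blast
    qed
  qed
  have "card S = 2 * card M" by (rule count2[OF bij])
  then show ?thesis by (simp add: S_def M_def)
qed

lemma case3:
  fixes m :: int
  assumes m8: "m mod 8 = 3"
  shows "card {(u::int,v::int,w::int). odd u \<and> odd v \<and> odd w \<and> u^2 + 7*v^2 + 28*w^2 = 4*m}
       = 2 * card {(x::int,y::int,z::int). m = x^2 + 7*y^2 + 28*z^2}"
proof -
  define M where "M = {(x::int,y::int,z::int). m = x^2 + 7*y^2 + 28*z^2}"
  define S where "S = {(u::int,v::int,w::int). odd u \<and> odd v \<and> odd w \<and> u^2 + 7*v^2 + 28*w^2 = 4*m}"
  define f where "f = (\<lambda>((x::int,y::int,z::int),b::bool). (3*(x div 2) + 7*z, sg b (x div 2 - 3*z), y))"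
  define g where "g = (\<lambda>(u::int,v::int,w::int).
      let b = \<not> 16 dvd (u - 3*v); v' = sg b v; z = (u - 3*v') div 16
      in ((2*(3*z + v'), w, z), b))"
  have ident: "(3*a + 7*z)^2 + 7*(a - 3*z)^2 + 28*y^2 = 4*((2*a)^2 + 7*y^2 + 28*z^2)"
    for a y z :: int by (simp add: power2_eq_square algebra_simps)
  have fform: "f ((x,y,z),b) = (3*(x div 2) + 7*z, sg b (x div 2 - 3*z), y)" for x y z b
    by (simp add: f_def)
  have A1: "g (f ((x,y,z),b)) = ((x,y,z),b) \<and> f ((x,y,z),b) \<in> S"
    if h: "(x,y,z) \<in> M" for x y z b
  proof -
    have mf: "even x \<and> odd y \<and> odd (x div 2 + z)" using M3_facts m8 h by (auto simp: M_def)
    then obtain a where a: "x = 2*a" by auto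
    then have xa: "x div 2 = a" by simp
    have oa: "odd (a + z)" using mf xa by simp
    have f1: "f ((x,y,z),b) = (3*a + 7*z, sg b (a - 3*z), y)" by (simp only: fform xa)
    have d1: "16 dvd (3*a + 7*z - 3*(a - 3*z))" by simp
    have d2: "\<not> 16 dvd (3*a + 7*z - 3*(-(a - 3*z)))" by (rule lin_n16b[OF oa])
    have e: "(3*a + 7*z - 3*(a - 3*z)) div 16 = z" "2*(3*z + (a - 3*z)) = x" using a by simp_all
    have 1: "g (f ((x,y,z),b)) = ((x,y,z),b)"
      unfolding f1 g_def using d1 d2 e by (cases b) (simp_all add: sg_def Let_def)
    have "m = x^2 + 7*y^2 + 28*z^2" using h by (simp add: M_def)
    moreover have "odd (3*a + 7*z)" "odd (a - 3*z)" using oa by presburger+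
    ultimately have 2: "f ((x,y,z),b) \<in> S" unfolding f1 S_def using mf a ident[of a z y] by simp
    from 1 2 show ?thesis by blast
  qed
  have A2: "f (g (u,v,w)) = (u,v,w) \<and> g (u,v,w) \<in> M \<times> UNIV"
    if h: "(u,v,w) \<in> S" for u v w
  proof -
    have ou: "odd u" and ov: "odd v" and ow: "odd w" and eq: "u^2 + 7*v^2 + 28*w^2 = 4*m"
      using h by (auto simp: S_def)
    obtain k2 where k2: "v^2 = 8*k2+1" using odd_sq[OF ov] by blast
    obtain k3 where k3: "w^2 = 8*k3+1" using odd_sq[OF ow] by blast
    have mj: "m = 8*(m div 8) + 3" using m8 by presburger
    have p1: "(u-3*v)*(u+3*v) = u^2 - 9*v^2" by (simp add: algebra_simps power2_eq_square)
    have "(u-3*v)*(u+3*v) = 32*(m div 8) - 128*k2 - 224*k3 - 32"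
      using p1 eq k2 k3 mj by linarith
    then have pr: "((u-3*v)*(u+3*v)) mod 32 = 0" using lin_p0_3 by blast
    have sm: "((u-3*v) + (u+3*v)) mod 4 = 2" using ou by presburger
    define b where "b = (\<not> 16 dvd (u - 3*v))"
    define v' where "v' = sg b v"
    have d16: "16 dvd (u - 3*v')"
      using two_adic0[OF pr sm] unfolding v'_def b_def sg_def by auto
    define z where "z = (u - 3*v') div 16"
    have ez: "u - 3*v' = 16*z" using d16 unfolding z_def by simp
    define a where "a = 3*z + v'"
    have u_eq: "u = 3*a + 7*z" using ez unfolding a_def by simp
    have v_eq: "v' = a - 3*z" unfolding a_def by simp
    have gs: "g (u,v,w) = ((2*a, w, z), b)"
      unfolding g_def Let_def b_def v'_def z_def a_def by simp
    have eq': "u^2 + 7*v'^2 + 28*w^2 = 4*m" using eq by (simp add: v'_def)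
    have inM: "(2*a, w, z) \<in> M"
      using eq' ident[of a z w] unfolding M_def u_eq v_eq by simp
    have k1: "(2*a) div 2 = a" by simp
    have "f (g (u,v,w)) = (3*a + 7*z, sg b (a - 3*z), w)"
      by (simp only: gs fform k1)
    also have "\<dots> = (u,v,w)" unfolding v_eq[symmetric] u_eq[symmetric] by (simp add: v'_def)
    finally have fg: "f (g (u,v,w)) = (u,v,w)" .
    show ?thesis using fg gs inM by simp
  qed
  have bij: "bij_betw f (M \<times> (UNIV::bool set)) S"
  proof (rule bij_betw_byWitness[where f'=g])
    show "\<forall>a\<in>M \<times> UNIV. g (f a) = a" using A1 by auto
    show "\<forall>a\<in>S. f (g a) = a" using A2 by auto
    show "f ` (M \<times> UNIV) \<subseteq> S" using A1 by auto
    show "g ` S \<subseteq> M \<times> UNIV"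
    proof
      fix s assume "s \<in> g ` S"
      then obtain u v w where "(u,v,w) \<in> S" "s = g (u,v,w)" by auto
      then show "s \<in> M \<times> UNIV" using A2 by blast
    qed
  qed
  have "card S = 2 * card M" by (rule count2[OF bij])
  then show ?thesis by (simp add: S_def M_def)
qed

lemma int_mod4: "n mod 4 = r \<Longrightarrow> int n mod 4 = int r"
  by (metis of_nat_mod of_nat_numeral)

theorem theorem5p1:
  fixes n :: nat
  assumes "n > 0"
  shows "(n mod 4 = 1 \<longrightarrow> t 1 4 7 n = 2 * N 1 4 7 (2 * n + 3))
       \<and> (n mod 4 = 3 \<longrightarrow> t 1 7 12 n = 2 * N 1 7 12 (2 * n + 5))
       \<and> (n mod 4 = 1 \<longrightarrow> t 1 7 28 n = 2 * N 1 7 28 (2 * n + 9))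
       \<and> (n mod 4 = 1 \<longrightarrow> t 3 4 21 n = 2 * N 3 4 21 (2 * n + 7))
       \<and> (n mod 4 = 1 \<longrightarrow> t 3 21 28 n = 2 * N 3 21 28 (2 * n + 13))"
proof (intro conjI impI)
  assume h: "n mod 4 = 1"
  then have hn: "int n mod 4 = 1" using int_mod4[of n 1] by simp
  have m: "int (2*n+3) mod 8 = 5" using hn by presburger
  have "t 1 4 7 n = card {(u::int,v::int,w::int). odd u \<and> odd v \<and> odd w \<and> u^2 + 4*v^2 + 7*w^2 = 4*int (2*n+3)}"
    unfolding t_odd by (rule arg_cong[where f=card]) (auto simp: algebra_simps)
  also have "\<dots> = 2 * card {(x::int,y::int,z::int). int (2*n+3) = x^2 + 4*y^2 + 7*z^2}" by (rule case1[OF m])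
  also have "\<dots> = 2 * N 1 4 7 (2 * n + 3)" unfolding N_def by simp
  finally show "t 1 4 7 n = 2 * N 1 4 7 (2 * n + 3)" .
next
  assume h: "n mod 4 = 3"
  then have hn: "int n mod 4 = 3" using int_mod4[of n 3] by simp
  have m: "int (2*n+5) mod 8 = 3" using hn by presburger
  have "t 1 7 12 n = card {(u::int,v::int,w::int). odd u \<and> odd v \<and> odd w \<and> u^2 + 7*v^2 + 12*w^2 = 4*int (2*n+5)}"
    unfolding t_odd by (rule arg_cong[where f=card]) (auto simp: algebra_simps)
  also have "\<dots> = 2 * card {(x::int,y::int,z::int). int (2*n+5) = x^2 + 7*y^2 + 12*z^2}" by (rule case2[OF m])
  also have "\<dots> = 2 * N 1 7 12 (2 * n + 5)" unfolding N_def by simp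
  finally show "t 1 7 12 n = 2 * N 1 7 12 (2 * n + 5)" .
next
  assume h: "n mod 4 = 1"
  then have hn: "int n mod 4 = 1" using int_mod4[of n 1] by simp
  have m: "int (2*n+9) mod 8 = 3" using hn by presburger
  have "t 1 7 28 n = card {(u::int,v::int,w::int). odd u \<and> odd v \<and> odd w \<and> u^2 + 7*v^2 + 28*w^2 = 4*int (2*n+9)}"
    unfolding t_odd by (rule arg_cong[where f=card]) (auto simp: algebra_simps)
  also have "\<dots> = 2 * card {(x::int,y::int,z::int). int (2*n+9) = x^2 + 7*y^2 + 28*z^2}" by (rule case3[OF m])
  also have "\<dots> = 2 * N 1 7 28 (2 * n + 9)" unfolding N_def by simp
  finally show "t 1 7 28 n = 2 * N 1 7 28 (2 * n + 9)" .
next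
  assume h: "n mod 4 = 1"
  then have hn: "int n mod 4 = 1" using int_mod4[of n 1] by simp
  have m: "int (2*n+7) mod 8 = 1" using hn by presburger
  have "t 3 4 21 n = card {(u::int,v::int,w::int). odd u \<and> odd v \<and> odd w \<and> 3*u^2 + 4*v^2 + 21*w^2 = 4*int (2*n+7)}"
    unfolding t_odd by (rule arg_cong[where f=card]) (auto simp: algebra_simps)
  also have "\<dots> = 2 * card {(x::int,y::int,z::int). int (2*n+7) = 3*x^2 + 4*y^2 + 21*z^2}" by (rule case4[OF m])
  also have "\<dots> = 2 * N 3 4 21 (2 * n + 7)" unfolding N_def by simp
  finally show "t 3 4 21 n = 2 * N 3 4 21 (2 * n + 7)" .
next
  assume h: "n mod 4 = 1"
  then have hn: "int n mod 4 = 1" using int_mod4[of n 1] by simp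
  have m: "int (2*n+13) mod 8 = 7" using hn by presburger
  have "t 3 21 28 n = card {(u::int,v::int,w::int). odd u \<and> odd v \<and> odd w \<and> 3*u^2 + 21*v^2 + 28*w^2 = 4*int (2*n+13)}"
    unfolding t_odd by (rule arg_cong[where f=card]) (auto simp: algebra_simps)
  also have "\<dots> = 2 * card {(x::int,y::int,z::int). int (2*n+13) = 3*x^2 + 21*y^2 + 28*z^2}" by (rule case5[OF m])
  also have "\<dots> = 2 * N 3 21 28 (2 * n + 13)" unfolding N_def by simp
  finally show "t 3 21 28 n = 2 * N 3 21 28 (2 * n + 13)" .
qed

end
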